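(* Let $l\in(0,\pi)$, $\alpha>0$, $\delta\ge0$. For $a\in[0,\pi-l]$ let $u_J$ be the solution of the Robin problem with heat source $J=\delta+\chi_{I(a,l)}$. Then $$\max_{a\in[0,\pi-l]}\operatorname{osc}(u_J)=\Theta_\alpha(l,\delta).$$ Moreover, if $\alpha>\alpha_g$, then $\operatorname{osc}(u_J)$, as a function of $a$, increases as $a$ varies from $0$ to $a_0$ and decreases as $a$ varies from $a_0$ to $\pi-l$. If $0<\alpha\le\alpha_g$, then $\operatorname{osc}(u_J)$ increases as $a$ varies from $0$ to $\pi-l$.
   Context: Robin problem: for $\alpha>0$ and $f\in L^1[-\pi,\pi]$, find $u\in C^1[-\pi,\pi]$ with $u'$ absolutely continuous on $[-\pi,\pi]$, $-u''=f$ a.e. on $(-\pi,\pi)$, and $-u'(-\pi)+\alpha u(-\pi)=u'(\pi)+\alpha u(\pi)=0$. It has a unique solution $u_f(x)=\int_{-\pi}^{\pi}G(x,y)f(y)\,dy$, where $G(x,y)=-\tfrac12 c_\alpha xy-\tfrac12|x-y|+\tfrac{1}{2c_\alpha}$ and $c_\alpha=\alpha/(1+\alpha\pi)$. $I(a,l)=[a-l,a+l]$; $\chi_E$ is the characteristic function of $E$; $\operatorname{osc}(u)=\max_{[-\pi,\pi]}u-\min_{[-\pi,\pi]}u$. $a_0=\dfrac{(1+\delta)l}{(1+\alpha\pi)(\delta+2lc_\alpha-l^2c_\alpha^2)}$. If $(1+\delta)l>\delta(\pi-l)$, let $\alpha_0$ be the unique positive root of $$(\pi^2\delta+2\pi l-l^2)\alpha^2+\frac{2(\pi\delta+l)(\pi-l)-\pi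 l(1+\delta)}{\pi-l}\,\alpha+\delta-\frac{(1+\delta)l}{\pi-l}=0,$$ and set $\alpha_g=\alpha_0$. Otherwise set $\alpha_g=0$. $\Theta_\alpha(l,\delta)=\dfrac12\,\dfrac{(1+\delta)l^2}{(\pi^2\delta+2\pi l-l^2)\alpha^2+2(\pi\delta+l)\alpha+\delta}+\pi l+\dfrac{\pi^2\delta}{2}-\dfrac{l^2}{2}$ if $\alpha>\alpha_g$. $\Theta_\alpha(l,\delta)=\dfrac12\,\dfrac{(l^2c_\alpha^2-2lc_\alpha-\delta)(\pi-l)^2}{1+\delta}+\dfrac{l(\pi-l)}{1+\alpha\pi}+\pi l+\dfrac{\pi^2\delta}{2}-\dfrac{l^2}{2}$ if $0<\alpha\le\alpha_g$. *)

theory Defs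
  imports "HOL-Analysis.Analysis"
begin

definition c_alpha :: "real \<Rightarrow> real" where
  "c_alpha \<alpha> = \<alpha> / (1 + \<alpha> * pi)"

definition robin_green :: "real \<Rightarrow> real \<Rightarrow> real \<Rightarrow> real" where
  "robin_green \<alpha> x y = - (1/2) * c_alpha \<alpha> * x * y - (1/2) * \<bar>x - y\<bar> + 1 / (2 * c_alpha \<alpha>)"

definition robin_sol :: "real \<Rightarrow> (real \<Rightarrow> real) \<Rightarrow> real \<Rightarrow> real" where
  "robin_sol \<alpha> f x = integral {-pi..pi} (\<lambda>y. robin_green \<alpha> x y * f y)"

definition osc :: "(real \<Rightarrow> real) \<Rightarrow> real" where
  "osc u = Sup (u ` {-pi..pi}) - Inf (u ` {-pi..pi})"

definition I_int :: "real \<Rightarrow> real \<Rightarrow> real set" where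
  "I_int a l = {a - l .. a + l}"

definition a_zero :: "real \<Rightarrow> real \<Rightarrow> real \<Rightarrow> real" where
  "a_zero \<alpha> l \<delta> = (1 + \<delta>) * l /
     ((1 + \<alpha> * pi) * (\<delta> + 2 * l * c_alpha \<alpha> - l\<^sup>2 * (c_alpha \<alpha>)\<^sup>2))"

definition quad_g :: "real \<Rightarrow> real \<Rightarrow> real \<Rightarrow> real" where
  "quad_g l \<delta> \<alpha> =
     (pi\<^sup>2 * \<delta> + 2 * pi * l - l\<^sup>2) * \<alpha>\<^sup>2
     + (2 * (pi * \<delta> + l) * (pi - l) - pi * l * (1 + \<delta>)) / (pi - l) * \<alpha>
     + \<delta> - (1 + \<delta>) * l / (pi - l)"

definition alpha_g :: "real \<Rightarrow> real \<Rightarrow> real" where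
  "alpha_g l \<delta> = (if (1 + \<delta>) * l > \<delta> * (pi - l)
                    then (THE \<alpha>. \<alpha> > 0 \<and> quad_g l \<delta> \<alpha> = 0) else 0)"

definition Theta :: "real \<Rightarrow> real \<Rightarrow> real \<Rightarrow> real" where
  "Theta \<alpha> l \<delta> =
    (if \<alpha> > alpha_g l \<delta> then
       (1/2) * ((1 + \<delta>) * l\<^sup>2 /
          ((pi\<^sup>2 * \<delta> + 2 * pi * l - l\<^sup>2) * \<alpha>\<^sup>2 + 2 * (pi * \<delta> + l) * \<alpha> + \<delta>))
       + pi * l + pi\<^sup>2 * \<delta> / 2 - l\<^sup>2 / 2
     else
       (1/2) * ((l\<^sup>2 * (c_alpha \<alpha>)\<^sup>2 - 2 * l * c_alpha \<alpha> - \<delta>) * (pi - l)\<^sup>2 / (1 + \<delta>))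
       + l * (pi - l) / (1 + \<alpha> * pi) + pi * l + pi\<^sup>2 * \<delta> / 2 - l\<^sup>2 / 2)"

end

theory Submission
  imports Defs
begin
definition Tf :: "real \<Rightarrow> real" where "Tf t = t * \<bar>t\<bar> / 2"

lemma Tf_deriv_at: "(Tf has_real_derivative \<bar>t\<bar>) (at t)"
proof (cases "t = 0")
  case True
  have "((\<lambda>y. \<bar>y\<bar> / 2) \<longlongrightarrow> \<bar>0::real\<bar> / 2) (at 0)"
    by (intro tendsto_intros) auto
  then have "((\<lambda>y. \<bar>y\<bar> / 2) \<longlongrightarrow> 0) (at (0::real))" by simp
  moreover have "eventually (\<lambda>y. \<bar>y\<bar> / 2 = (Tf y - Tf 0) / (y - 0)) (at (0::real))"
    by (auto simp: eventually_at_filter Tf_def)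
  ultimately have "((\<lambda>y. (Tf y - Tf 0) / (y - 0)) \<longlongrightarrow> 0) (at (0::real))"
    using tendsto_cong by fastforce
  then show ?thesis using True by (simp add: has_field_derivative_iff)
next
  case False
  show ?thesis
  proof (cases "t > 0")
    case True
    have d: "((\<lambda>t. t * t / 2) has_real_derivative \<bar>t\<bar>) (at t)"
      using True by (auto intro!: derivative_eq_intros)
    show ?thesis using True
      by (intro has_field_derivative_transform_within_open[OF d, of "{0<..}"]) (auto simp: Tf_def)
  next
    case False
    with \<open>t \<noteq> 0\<close> have "t < 0" by simp
    have d: "((\<lambda>t. - t * t / 2) has_real_derivative \<bar>t\<bar>) (at t)"
      using \<open>t < 0\<close> by (auto intro!: derivative_eq_intros)
    show ?thesis using \<open>t<0\<close>
      by (intro has_field_derivative_transform_within_open[OF d, of "{..<0}"]) (auto simp: Tf_def)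
  qed
qed

lemma Tf_deriv[derivative_intros]:
  "(g has_real_derivative g') (at x within S) \<Longrightarrow>
   ((\<lambda>x. Tf (g x)) has_real_derivative \<bar>g x\<bar> * g') (at x within S)"
  by (rule DERIV_chain2[OF Tf_deriv_at])

definition Kf :: "real \<Rightarrow> real \<Rightarrow> real \<Rightarrow> real" where
  "Kf \<alpha> x y = - c_alpha \<alpha> * x * y\<^sup>2 / 4 - Tf (y - x) / 2 + y / (2 * c_alpha \<alpha>)"

lemma c_pos: "0 < \<alpha> \<Longrightarrow> 0 < c_alpha \<alpha>"
  by (simp add: c_alpha_def pos_add_strict)

lemma c_nz: "0 < \<alpha> \<Longrightarrow> c_alpha \<alpha> \<noteq> 0"
  using c_pos by force

lemma green_has_integral:
  assumes "p \<le> q" "0 < \<alpha>"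
  shows "((\<lambda>y. robin_green \<alpha> x y) has_integral (Kf \<alpha> x q - Kf \<alpha> x p)) {p..q}"
proof -
  have "((\<lambda>y. Kf \<alpha> x y) has_real_derivative robin_green \<alpha> x y) (at y within {p..q})" for y
    unfolding Kf_def
    by (auto intro!: derivative_eq_intros simp: robin_green_def abs_minus_commute power2_eq_square field_simps c_nz[OF assms(2)])
  then show ?thesis
    by (intro fundamental_theorem_of_calculus[OF assms(1)])
       (simp add: has_real_derivative_iff_has_vector_derivative)
qed

definition Uf :: "real \<Rightarrow> real \<Rightarrow> real \<Rightarrow> real \<Rightarrow> real \<Rightarrow> real" where
  "Uf \<alpha> \<delta> l a x = \<delta> * (Kf \<alpha> x pi - Kf \<alpha> x (-pi)) + (Kf \<alpha> x (a + l) - Kf \<alpha> x (a - l))"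

lemma sol_formula:
  assumes "-pi \<le> a - l" "a + l \<le> pi" "0 \<le> l" "0 < \<alpha>"
  shows "robin_sol \<alpha> (\<lambda>y. \<delta> + indicator (I_int a l) y) x = Uf \<alpha> \<delta> l a x"
proof -
  have h1: "((\<lambda>y. robin_green \<alpha> x y * \<delta>) has_integral (Kf \<alpha> x pi - Kf \<alpha> x (-pi)) * \<delta>) {-pi..pi}"
    by (intro has_integral_mult_left green_has_integral) (use assms in simp_all)
  have "((\<lambda>y. robin_green \<alpha> x y) has_integral (Kf \<alpha> x (a + l) - Kf \<alpha> x (a - l))) (I_int a l \<inter> {-pi..pi})"
    using assms by (simp add: I_int_def Int_absorb2 green_has_integral[OF _ assms(4)])
  then have "((\<lambda>y. if y \<in> I_int a l then robin_green \<alpha> x y else 0) has_integral (Kf \<alpha> x (a + l) - Kf \<alpha> x (a - l))) {-pi..pi}"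
    by (simp add: has_integral_restrict_Int)
  moreover have "(\<lambda>y. if y \<in> I_int a l then robin_green \<alpha> x y else 0) = (\<lambda>y. robin_green \<alpha> x y * indicator (I_int a l) y)"
    by (auto simp: indicator_def)
  ultimately have h2: "((\<lambda>y. robin_green \<alpha> x y * indicator (I_int a l) y) has_integral (Kf \<alpha> x (a + l) - Kf \<alpha> x (a - l))) {-pi..pi}"
    by simp
  have "((\<lambda>y. robin_green \<alpha> x y * (\<delta> + indicator (I_int a l) y)) has_integral Uf \<alpha> \<delta> l a x) {-pi..pi}"
    using has_integral_add[OF h1 h2] by (simp add: Uf_def distrib_left mult.commute)
  then show ?thesis unfolding robin_sol_def by (rule integral_unique)
qed

definition Df :: "real \<Rightarrow> real \<Rightarrow> real \<Rightarrow> real \<Rightarrow> real \<Rightarrow> real" where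
  "Df \<alpha> \<delta> l a x = \<delta> * (\<bar>pi - x\<bar> - \<bar>-pi - x\<bar>) / 2 - c_alpha \<alpha> * a * l + (\<bar>a + l - x\<bar> - \<bar>a - l - x\<bar>) / 2"

lemma Uf_deriv: "0 < \<alpha> \<Longrightarrow> ((Uf \<alpha> \<delta> l a) has_real_derivative Df \<alpha> \<delta> l a x) (at x)"
  unfolding Uf_def Kf_def
  by (auto intro!: derivative_eq_intros simp: Df_def power2_eq_square field_simps c_nz)

lemma osc_conc:
  fixes u u' :: "real \<Rightarrow> real"
  assumes der: "\<And>x. (u has_real_derivative u' x) (at x)"
    and xs: "-pi \<le> xs" "xs \<le> pi"
    and pos: "\<And>x. -pi \<le> x \<Longrightarrow> x \<le> xs \<Longrightarrow> u' x \<ge> 0"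
    and neg: "\<And>x. xs \<le> x \<Longrightarrow> x \<le> pi \<Longrightarrow> u' x \<le> 0"
    and ends: "u (-pi) \<le> u pi"
  shows "osc u = u xs - u (-pi)"
proof -
  have inc: "u x \<le> u y" if "-pi \<le> x" "x \<le> y" "y \<le> xs" for x y
    by (rule DERIV_nonneg_imp_nondecreasing[OF that(2)]) (use der pos that in fastforce)
  have dec: "u x \<ge> u y" if "xs \<le> x" "x \<le> y" "y \<le> pi" for x y
    by (rule DERIV_nonpos_imp_nonincreasing[OF that(2)]) (use der neg that in fastforce)
  have "Sup (u ` {-pi..pi}) = u xs"
  proof (rule cSup_eq_maximum)
    show "u xs \<in> u ` {-pi..pi}" using xs by auto
  next
    fix z assume "z \<in> u ` {-pi..pi}"
    then obtain x where x: "-pi \<le> x" "x \<le> pi" "z = u x" by auto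
    show "z \<le> u xs"
    proof (cases "x \<le> xs")
      case True then show ?thesis using inc[of x xs] x by auto
    next
      case False then show ?thesis using dec[of xs x] x by auto
    qed
  qed
  moreover have "Inf (u ` {-pi..pi}) = u (-pi)"
  proof (rule cInf_eq_minimum)
    show "u (-pi) \<in> u ` {-pi..pi}" by auto
  next
    fix z assume "z \<in> u ` {-pi..pi}"
    then obtain x where x: "-pi \<le> x" "x \<le> pi" "z = u x" by auto
    show "u (-pi) \<le> z"
    proof (cases "x \<le> xs")
      case True then show ?thesis using inc[of "-pi" x] x by auto
    next
      case False then show ?thesis using dec[of x pi] x ends by auto
    qed
  qed
  ultimately show ?thesis by (simp add: osc_def)
qed

lemma c_pi_lt: assumes "0 < \<alpha>" shows "c_alpha \<alpha> * pi < 1"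
proof -
  have "0 < 1 + \<alpha> * pi" using assms pi_gt_zero by (simp add: pos_add_strict)
  then show ?thesis by (simp add: c_alpha_def field_simps)
qed

lemma Uf_explicit:
  assumes "-pi \<le> x" "x \<le> pi" "0 < \<alpha>"
  shows "Uf \<alpha> \<delta> l a x = \<delta> * (pi / c_alpha \<alpha> - (pi\<^sup>2 + x\<^sup>2) / 2) - c_alpha \<alpha> * a * l * x
           - (Tf (a + l - x) - Tf (a - l - x)) / 2 + l / c_alpha \<alpha>"
proof -
  have e1: "Tf (pi - x) = (pi - x)\<^sup>2 / 2" using assms by (simp add: Tf_def power2_eq_square algebra_simps)
  have e2: "Tf (-pi - x) = - (pi + x)\<^sup>2 / 2" using assms by (simp add: Tf_def power2_eq_square algebra_simps)
  show ?thesis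
    using c_nz[OF assms(3)]
    by (simp add: Uf_def Kf_def e1 e2) (simp add: field_simps power2_eq_square)
qed

lemma Df_explicit:
  assumes "-pi \<le> x" "x \<le> pi"
  shows "Df \<alpha> \<delta> l a x = - (\<delta> * x) - c_alpha \<alpha> * a * l + (\<bar>a + l - x\<bar> - \<bar>a - l - x\<bar>) / 2"
  using assms by (simp add: Df_def algebra_simps)

lemma Df_mono:
  assumes "-pi \<le> x" "x \<le> y" "y \<le> pi" "0 \<le> \<delta>" "0 \<le> l"
  shows "Df \<alpha> \<delta> l a y \<le> Df \<alpha> \<delta> l a x"
proof -
  define g where "g t = \<bar>a + l - t\<bar> - \<bar>a - l - t\<bar>" for t
  define c where "c = c_alpha \<alpha> * a * l"
  have "\<delta> * x \<le> \<delta> * y" using assms by (simp add: mult_left_mono)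
  moreover have "g y \<le> g x"
    using assms unfolding g_def by arith
  moreover have "Df \<alpha> \<delta> l a x = - (\<delta> * x) - c + g x / 2"
    unfolding g_def c_def by (rule Df_explicit) (use assms in auto)
  moreover have "Df \<alpha> \<delta> l a y = - (\<delta> * y) - c + g y / 2"
    unfolding g_def c_def by (rule Df_explicit) (use assms in auto)
  ultimately show ?thesis by linarith
qed

lemma osc_formula:
  assumes l: "0 \<le> l" and a: "0 \<le> a" "a \<le> pi - l" and al: "0 < \<alpha>" and d: "0 \<le> \<delta>"
    and xs: "-pi \<le> xs" "xs \<le> pi" and D0: "Df \<alpha> \<delta> l a xs = 0"
  shows "osc (robin_sol \<alpha> (\<lambda>y. \<delta> + indicator (I_int a l) y)) = Uf \<alpha> \<delta> l a xs - Uf \<alpha> \<delta> l a (-pi)"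
proof -
  have eq: "robin_sol \<alpha> (\<lambda>y. \<delta> + indicator (I_int a l) y) = Uf \<alpha> \<delta> l a"
    using sol_formula[of a l \<alpha> \<delta>] assms pi_gt_zero by (intro ext) auto
  have ends: "Uf \<alpha> \<delta> l a (-pi) \<le> Uf \<alpha> \<delta> l a pi"
  proof -
    have c: "0 < c_alpha \<alpha>" "c_alpha \<alpha> * pi < 1" using c_pos c_pi_lt al by auto
    have t1: "Tf (a + l - pi) = - (pi - a - l)\<^sup>2 / 2" using a by (simp add: Tf_def power2_eq_square algebra_simps)
    have t2: "Tf (a - l - pi) = - (pi - a + l)\<^sup>2 / 2" using a l by (simp add: Tf_def power2_eq_square algebra_simps)
    have t3: "Tf (pi + (a + l)) = (pi + a + l)\<^sup>2 / 2" using a l pi_gt_zero by (simp add: Tf_def power2_eq_square algebra_simps)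
    have t4: "Tf (a - l - - pi) = (pi + a - l)\<^sup>2 / 2" using a l by (simp add: Tf_def power2_eq_square algebra_simps)
    have t5: "Tf (pi + a - l) = (pi + a - l)\<^sup>2 / 2" using a l by (simp add: Tf_def power2_eq_square algebra_simps)
    have "Uf \<alpha> \<delta> l a pi - Uf \<alpha> \<delta> l a (-pi) = 2 * l * a * (1 - c_alpha \<alpha> * pi)"
      using al pi_gt_zero
      by (simp add: Uf_explicit t1 t2 t4 power2_eq_square) (simp add: field_simps t3 t5 power2_eq_square)
    moreover have "0 \<le> 2 * l * a * (1 - c_alpha \<alpha> * pi)" using c l a by simp
    ultimately show ?thesis by linarith
  qed
  show ?thesis unfolding eq
  proof (rule osc_conc[OF Uf_deriv[OF al] xs])
    fix x assume "-pi \<le> x" "x \<le> xs"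
    then show "0 \<le> Df \<alpha> \<delta> l a x" using Df_mono[of x xs \<delta> l \<alpha> a] D0 xs d l by fastforce
  next
    fix x assume "xs \<le> x" "x \<le> pi"
    then show "Df \<alpha> \<delta> l a x \<le> 0" using Df_mono[of xs x \<delta> l \<alpha> a] D0 xs d l by fastforce
  qed (rule ends)
qed

lemma oscA:
  assumes l: "0 < l" "l < pi" and al: "0 < \<alpha>" and d: "0 \<le> \<delta>"
    and a: "0 \<le> a" "a \<le> pi - l" and a1: "a * (c_alpha \<alpha> * l + \<delta>) \<le> l * (1 + \<delta>)"
  shows "osc (robin_sol \<alpha> (\<lambda>y. \<delta> + indicator (I_int a l) y))
           = (1 + \<delta>) * (a * (1 - c_alpha \<alpha> * l) / (1 + \<delta>) + pi)\<^sup>2 / 2 - (a - l + pi)\<^sup>2 / 2"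
proof -
  define c where "c = c_alpha \<alpha>"
  define xs where "xs = a * (1 - c * l) / (1 + \<delta>)"
  have c: "0 < c" "c * pi < 1" using c_pos c_pi_lt al unfolding c_def by auto
  have cl: "c * l < 1" using c l
    by (smt (verit, best) mult_strict_left_mono)
  have rel: "(1 + \<delta>) * xs = a * (1 - c * l)" using d unfolding xs_def by simp
  have cal: "c * a * l = a - (1 + \<delta>) * xs" using rel by (simp add: algebra_simps)
  have xs0: "0 \<le> xs" unfolding xs_def using a cl d by simp
  have "xs \<le> a"
  proof -
    have "0 \<le> c * l" using c l by simp
    then have "a * (1 - c * l) \<le> a * (1 + \<delta>)" using a d
      by (intro mult_left_mono) auto
    then show ?thesis unfolding xs_def using d by (simp add: divide_le_eq)
  qed
  have xsl: "a - l \<le> xs"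
  proof -
    have "(1 + \<delta>) * (xs - (a - l)) = l * (1 + \<delta>) - a * (c * l + \<delta>)"
      using rel by (simp add: algebra_simps)
    then have "0 \<le> (1 + \<delta>) * (xs - (a - l))" using a1 unfolding c_def by simp
    then show ?thesis using d by (simp add: zero_le_mult_iff)
  qed
  have xsb: "-pi \<le> xs" "xs \<le> pi" using xs0 \<open>xs \<le> a\<close> a l pi_gt_zero by linarith+
  have "Df \<alpha> \<delta> l a xs = - (\<delta> * xs) - c * a * l + ((a + l - xs) - (xs - (a - l))) / 2"
    using Df_explicit[OF xsb, of \<alpha> \<delta> l a] xsl \<open>xs \<le> a\<close> l unfolding c_def by simp
  also have "\<dots> = 0" using cal by (simp add: algebra_simps)
  finally have D0: "Df \<alpha> \<delta> l a xs = 0" .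
  have t1: "Tf (a + l - xs) = (a + l - xs)\<^sup>2 / 2" using \<open>xs \<le> a\<close> l by (simp add: Tf_def power2_eq_square)
  have t2: "Tf (a - l - xs) = - (xs - (a - l))\<^sup>2 / 2" using xsl by (simp add: Tf_def power2_eq_square algebra_simps)
  have t3: "Tf (a + l - - pi) = (a + l + pi)\<^sup>2 / 2" using a l pi_gt_zero by (simp add: Tf_def power2_eq_square)
  have t4: "Tf (a - l - - pi) = (a - l + pi)\<^sup>2 / 2" using a l by (simp add: Tf_def power2_eq_square)
  have U1: "Uf \<alpha> \<delta> l a xs = \<delta> * (pi / c - (pi\<^sup>2 + xs\<^sup>2) / 2) - (a - (1 + \<delta>) * xs) * xs
           - ((a + l - xs)\<^sup>2 / 2 + (xs - (a - l))\<^sup>2 / 2) / 2 + l / c"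
    using Uf_explicit[OF xsb al, of \<delta> l a] t1 t2 cal unfolding c_def by simp
  have U0: "Uf \<alpha> \<delta> l a (-pi) = \<delta> * (pi / c - (pi\<^sup>2 + pi\<^sup>2) / 2) - (a - (1 + \<delta>) * xs) * (-pi)
           - ((a + l + pi)\<^sup>2 / 2 - (a - l + pi)\<^sup>2 / 2) / 2 + l / c"
    using Uf_explicit[of "-pi" \<alpha> \<delta> l a] al pi_gt_zero t3 t4 cal unfolding c_def by simp
  have "osc (robin_sol \<alpha> (\<lambda>y. \<delta> + indicator (I_int a l) y)) = Uf \<alpha> \<delta> l a xs - Uf \<alpha> \<delta> l a (-pi)"
    by (rule osc_formula[OF _ a al d xsb D0]) (use l in simp)
  also have "\<dots> = (1 + \<delta>) * (xs + pi)\<^sup>2 / 2 - (a - l + pi)\<^sup>2 / 2"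
    unfolding U1 U0 by (simp add: power2_eq_square field_simps)
  finally show ?thesis unfolding xs_def c_def .
qed

lemma oscB:
  assumes l: "0 < l" "l < pi" and al: "0 < \<alpha>" and d: "0 < \<delta>"
    and a: "0 \<le> a" "a \<le> pi - l" and a1: "l * (1 + \<delta>) \<le> a * (c_alpha \<alpha> * l + \<delta>)"
  shows "osc (robin_sol \<alpha> (\<lambda>y. \<delta> + indicator (I_int a l) y))
           = \<delta> * ((l - c_alpha \<alpha> * a * l) / \<delta> + pi)\<^sup>2 / 2"
proof -
  define c where "c = c_alpha \<alpha>"
  define xs where "xs = (l - c * a * l) / \<delta>"
  have c: "0 < c" "c * pi < 1" using c_pos c_pi_lt al unfolding c_def by auto
  have ca: "c * a < 1" using c a l
    by (smt (verit, best) mult_left_mono)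
  have rel: "\<delta> * xs = l - c * a * l" using d unfolding xs_def by simp
  have cal: "c * a * l = l - \<delta> * xs" using rel by (simp add: algebra_simps)
  have xsl: "xs \<le> a - l"
  proof -
    have "\<delta> * (a - l - xs) = a * (c * l + \<delta>) - l * (1 + \<delta>)"
      using rel by (simp add: algebra_simps)
    then have "0 \<le> \<delta> * (a - l - xs)" using a1 unfolding c_def by simp
    then show ?thesis using d by (simp add: zero_le_mult_iff)
  qed
  have "-pi \<le> xs"
  proof -
    have "\<delta> * (xs + pi) = l * (1 - c * a) + \<delta> * pi"
      using rel by (simp add: algebra_simps)
    moreover have "0 \<le> l * (1 - c * a) + \<delta> * pi" using ca l d pi_gt_zero by simp
    ultimately have "0 \<le> \<delta> * (xs + pi)" by simp
    then show ?thesis using d by (simp add: zero_le_mult_iff)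
  qed
  then have xsb: "-pi \<le> xs" "xs \<le> pi" using xsl a l by linarith+
  have "Df \<alpha> \<delta> l a xs = - (\<delta> * xs) - c * a * l + ((a + l - xs) - (a - l - xs)) / 2"
    using Df_explicit[OF xsb, of \<alpha> \<delta> l a] xsl l unfolding c_def by simp
  also have "\<dots> = 0" using cal by (simp add: algebra_simps)
  finally have D0: "Df \<alpha> \<delta> l a xs = 0" .
  have t1: "Tf (a + l - xs) = (a + l - xs)\<^sup>2 / 2" using xsl l by (simp add: Tf_def power2_eq_square)
  have t2: "Tf (a - l - xs) = (a - l - xs)\<^sup>2 / 2" using xsl by (simp add: Tf_def power2_eq_square)
  have t3: "Tf (a + l - - pi) = (a + l + pi)\<^sup>2 / 2" using a l pi_gt_zero by (simp add: Tf_def power2_eq_square)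
  have t4: "Tf (a - l - - pi) = (a - l + pi)\<^sup>2 / 2" using a l by (simp add: Tf_def power2_eq_square)
  have U1: "Uf \<alpha> \<delta> l a xs = \<delta> * (pi / c - (pi\<^sup>2 + xs\<^sup>2) / 2) - (l - \<delta> * xs) * xs
           - ((a + l - xs)\<^sup>2 / 2 - (a - l - xs)\<^sup>2 / 2) / 2 + l / c"
    using Uf_explicit[OF xsb al, of \<delta> l a] t1 t2 cal unfolding c_def by simp
  have U0: "Uf \<alpha> \<delta> l a (-pi) = \<delta> * (pi / c - (pi\<^sup>2 + pi\<^sup>2) / 2) - (l - \<delta> * xs) * (-pi)
           - ((a + l + pi)\<^sup>2 / 2 - (a - l + pi)\<^sup>2 / 2) / 2 + l / c"
    using Uf_explicit[of "-pi" \<alpha> \<delta> l a] al pi_gt_zero t3 t4 cal unfolding c_def by simp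
  have "osc (robin_sol \<alpha> (\<lambda>y. \<delta> + indicator (I_int a l) y)) = Uf \<alpha> \<delta> l a xs - Uf \<alpha> \<delta> l a (-pi)"
    by (rule osc_formula[OF _ a al _ xsb D0]) (use l d in simp_all)
  also have "\<dots> = \<delta> * (xs + pi)\<^sup>2 / 2"
    unfolding U1 U0 by (simp add: power2_eq_square field_simps)
  finally show ?thesis unfolding xs_def c_def .
qed

definition Ef :: "real \<Rightarrow> real \<Rightarrow> real \<Rightarrow> real" where
  "Ef \<alpha> l \<delta> = \<delta> + 2 * l * c_alpha \<alpha> - l\<^sup>2 * (c_alpha \<alpha>)\<^sup>2"

definition Qf :: "real \<Rightarrow> real \<Rightarrow> real \<Rightarrow> real \<Rightarrow> real" where
  "Qf \<alpha> l \<delta> a = \<delta> * pi\<^sup>2 / 2 + pi * l - l\<^sup>2 / 2 + l * (1 - c_alpha \<alpha> * pi) * a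
     - (Ef \<alpha> l \<delta> / (1 + \<delta>)) * a\<^sup>2 / 2"

lemma one_minus_cpi: "0 < \<alpha> \<Longrightarrow> 1 - c_alpha \<alpha> * pi = 1 / (1 + \<alpha> * pi)"
proof -
  assume "0 < \<alpha>"
  then have "0 < 1 + \<alpha> * pi" using pi_gt_zero by (simp add: pos_add_strict)
  then show ?thesis by (simp add: c_alpha_def field_simps)
qed

lemma Ef_pos:
  assumes "0 < l" "l < pi" "0 < \<alpha>" "0 \<le> \<delta>"
  shows "0 < Ef \<alpha> l \<delta>"
proof -
  have c: "0 < c_alpha \<alpha>" "c_alpha \<alpha> * pi < 1" using c_pos c_pi_lt assms by auto
  have "c_alpha \<alpha> * l < 1" using c assms by (smt (verit, best) mult_strict_left_mono)
  then have "0 < (l * c_alpha \<alpha>) * (2 - l * c_alpha \<alpha>)" using c assms by (simp add: mult.commute)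
  moreover have "Ef \<alpha> l \<delta> = \<delta> + (l * c_alpha \<alpha>) * (2 - l * c_alpha \<alpha>)"
    unfolding Ef_def by (simp add: power2_eq_square algebra_simps)
  ultimately show ?thesis using assms by linarith
qed

lemma QA_eq:
  assumes "0 \<le> \<delta>"
  shows "(1 + \<delta>) * (a * (1 - c_alpha \<alpha> * l) / (1 + \<delta>) + pi)\<^sup>2 / 2 - (a - l + pi)\<^sup>2 / 2 = Qf \<alpha> l \<delta> a"
proof -
  define c where "c = c_alpha \<alpha>"
  define k where "k = a * (1 - c * l) / (1 + \<delta>)"
  have nz: "1 + \<delta> \<noteq> 0" using assms by simp
  have e1: "(1 + \<delta>) * (k + pi) = a * (1 - c * l) + (1 + \<delta>) * pi"
  proof -
    have "(1 + \<delta>) * k = a * (1 - c * l)" unfolding k_def using nz by simp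
    then show ?thesis by (simp add: distrib_left)
  qed
  have "(1 + \<delta>) * ((1 + \<delta>) * (k + pi)\<^sup>2 / 2 - (a - l + pi)\<^sup>2 / 2)
      = ((1 + \<delta>) * (k + pi))\<^sup>2 / 2 - (1 + \<delta>) * (a - l + pi)\<^sup>2 / 2"
    by (simp add: power2_eq_square algebra_simps)
  also have "\<dots> = (a * (1 - c * l) + (1 + \<delta>) * pi)\<^sup>2 / 2 - (1 + \<delta>) * (a - l + pi)\<^sup>2 / 2"
    unfolding e1 ..
  also have "\<dots> = (1 + \<delta>) * (\<delta> * pi\<^sup>2 / 2 + pi * l - l\<^sup>2 / 2 + l * (1 - c * pi) * a)
       - (\<delta> + 2 * l * c - l\<^sup>2 * c\<^sup>2) * a\<^sup>2 / 2"
    by (simp add: power2_eq_square field_simps)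
  also have "\<dots> = (1 + \<delta>) * Qf \<alpha> l \<delta> a"
    unfolding Qf_def Ef_def c_def[symmetric] using nz by (simp add: field_simps)
  finally have "(1 + \<delta>) * ((1 + \<delta>) * (k + pi)\<^sup>2 / 2 - (a - l + pi)\<^sup>2 / 2) = (1 + \<delta>) * Qf \<alpha> l \<delta> a" .
  then show ?thesis using nz unfolding k_def c_def by simp
qed

lemma a0_eq:
  assumes "0 < \<alpha>"
  shows "a_zero \<alpha> l \<delta> = l * (1 - c_alpha \<alpha> * pi) * (1 + \<delta>) / Ef \<alpha> l \<delta>"
  using assms unfolding a_zero_def one_minus_cpi[OF assms] Ef_def by simp

lemma cancel_aux: "e \<noteq> 0 \<Longrightarrow> d \<noteq> 0 \<Longrightarrow> e / d * (x * d / e) = (x::real)"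
  by (simp add: field_simps)

lemma Q_diff:
  assumes "0 < l" "l < pi" "0 < \<alpha>" "0 \<le> \<delta>"
  shows "Qf \<alpha> l \<delta> b - Qf \<alpha> l \<delta> a = (b - a) * (Ef \<alpha> l \<delta> / (1 + \<delta>)) * (a_zero \<alpha> l \<delta> - (a + b) / 2)"
proof -
  define g where "g = Ef \<alpha> l \<delta> / (1 + \<delta>)"
  define \<beta> where "\<beta> = l * (1 - c_alpha \<alpha> * pi)"
  have "Ef \<alpha> l \<delta> \<noteq> 0" using Ef_pos[OF assms] by simp
  moreover have "1 + \<delta> \<noteq> 0" using assms by simp
  ultimately have k: "g * a_zero \<alpha> l \<delta> = \<beta>" using assms
    unfolding a0_eq[OF assms(3)] g_def \<beta>_def by (simp add: cancel_aux)
  have "(b - a) * g * (a_zero \<alpha> l \<delta> - (a + b) / 2) = (b - a) * (g * a_zero \<alpha> l \<delta>) - g * (b\<^sup>2 - a\<^sup>2) / 2"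
    by (simp add: power2_eq_square algebra_simps)
  also have "\<dots> = (b - a) * \<beta> - g * (b\<^sup>2 - a\<^sup>2) / 2" unfolding k ..
  also have "\<dots> = Qf \<alpha> l \<delta> b - Qf \<alpha> l \<delta> a"
    unfolding Qf_def g_def[symmetric] \<beta>_def by (simp add: field_simps)
  finally show ?thesis unfolding g_def by simp
qed

lemma Q_inc:
  assumes "0 < l" "l < pi" "0 < \<alpha>" "0 \<le> \<delta>" "a < b" "b \<le> a_zero \<alpha> l \<delta>"
  shows "Qf \<alpha> l \<delta> a < Qf \<alpha> l \<delta> b"
proof -
  have "0 < (b - a) * (Ef \<alpha> l \<delta> / (1 + \<delta>)) * (a_zero \<alpha> l \<delta> - (a + b) / 2)"
    using assms Ef_pos[OF assms(1-4)] by (intro mult_pos_pos) auto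
  then show ?thesis using Q_diff[OF assms(1-4), of b a] by simp
qed

lemma Q_dec:
  assumes "0 < l" "l < pi" "0 < \<alpha>" "0 \<le> \<delta>" "a < b" "a_zero \<alpha> l \<delta> \<le> a"
  shows "Qf \<alpha> l \<delta> b < Qf \<alpha> l \<delta> a"
proof -
  have "0 < (b - a) * (Ef \<alpha> l \<delta> / (1 + \<delta>)) * ((a + b) / 2 - a_zero \<alpha> l \<delta>)"
    using assms Ef_pos[OF assms(1-4)] by (intro mult_pos_pos) auto
  moreover have "(b - a) * (Ef \<alpha> l \<delta> / (1 + \<delta>)) * (a_zero \<alpha> l \<delta> - (a + b) / 2)
     = - ((b - a) * (Ef \<alpha> l \<delta> / (1 + \<delta>)) * ((a + b) / 2 - a_zero \<alpha> l \<delta>))"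
    by (metis minus_diff_eq mult_minus_right)
  ultimately show ?thesis using Q_diff[OF assms(1-4), of b a] by linarith
qed

lemma a0_pos:
  assumes "0 < l" "l < pi" "0 < \<alpha>" "0 \<le> \<delta>"
  shows "0 < a_zero \<alpha> l \<delta>"
  using assms Ef_pos[OF assms] c_pi_lt[OF assms(3)] unfolding a0_eq[OF assms(3)] by simp

lemma a0_le_a1:
  assumes "0 < l" "l < pi" "0 < \<alpha>" "0 \<le> \<delta>"
  shows "a_zero \<alpha> l \<delta> * (c_alpha \<alpha> * l + \<delta>) \<le> l * (1 + \<delta>)"
proof -
  define A where "A = 1 + \<alpha> * pi"
  define c where "c = c_alpha \<alpha>"
  have A: "1 \<le> A" using assms pi_gt_zero unfolding A_def by simp
  have cA: "c * A = \<alpha>" unfolding c_def A_def c_alpha_def using A A_def by simp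
  have c: "0 < c" "c * pi < 1" using c_pos c_pi_lt assms unfolding c_def by auto
  have cl: "c * l < 1" using c assms by (smt (verit, best) mult_strict_left_mono)
  have E: "0 < Ef \<alpha> l \<delta>" using Ef_pos[OF assms] .
  have "A * Ef \<alpha> l \<delta> = A * \<delta> + 2 * l * (c * A) - l * l * c * (c * A)"
    unfolding Ef_def c_def[symmetric] by (simp add: power2_eq_square algebra_simps)
  also have "\<dots> = A * \<delta> + \<alpha> * l * (2 - c * l)" unfolding cA by (simp add: algebra_simps)
  finally have AE: "A * Ef \<alpha> l \<delta> = A * \<delta> + \<alpha> * l * (2 - c * l)" .
  have "\<alpha> \<ge> c" using cA A c by (metis mult_le_cancel_left1 less_le_not_le)
  then have "\<alpha> * l * (2 - c * l) \<ge> c * l * 1"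
    using cl assms c by (intro mult_mono) auto
  moreover have "A * \<delta> \<ge> \<delta>" using A assms by (simp add: mult_le_cancel_right1)
  ultimately have "c * l + \<delta> \<le> A * Ef \<alpha> l \<delta>" using AE by simp
  moreover have "a_zero \<alpha> l \<delta> = (1 + \<delta>) * l / (A * Ef \<alpha> l \<delta>)"
    unfolding a_zero_def A_def Ef_def ..
  moreover have "0 \<le> a_zero \<alpha> l \<delta>" using a0_pos[OF assms] by simp
  ultimately have "a_zero \<alpha> l \<delta> * (c * l + \<delta>) \<le> a_zero \<alpha> l \<delta> * (A * Ef \<alpha> l \<delta>)"
    by (intro mult_left_mono) auto
  moreover have "a_zero \<alpha> l \<delta> * (A * Ef \<alpha> l \<delta>) = l * (1 + \<delta>)"
    using \<open>a_zero \<alpha> l \<delta> = (1 + \<delta>) * l / (A * Ef \<alpha> l \<delta>)\<close> A E by simp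
  ultimately show ?thesis unfolding c_def by simp
qed

lemma pos_root:
  fixes p q s :: real
  assumes p: "0 < p" and s: "s < 0"
  shows "\<exists>r>0. p * r\<^sup>2 + q * r + s = 0 \<and> (\<forall>x>0. p * x\<^sup>2 + q * x + s > 0 \<longleftrightarrow> x > r)
           \<and> (\<forall>x>0. p * x\<^sup>2 + q * x + s = 0 \<longrightarrow> x = r)"
proof -
  define D where "D = q\<^sup>2 - 4 * p * s"
  have "0 < p * s * (-4)" using p s by (simp add: mult_pos_neg)
  then have Dgt: "q\<^sup>2 < D" unfolding D_def by simp
  then have D0: "0 \<le> D" by (smt (verit) zero_le_power2)
  have sq: "(sqrt D)\<^sup>2 = D" using D0 by simp
  have "sqrt (q\<^sup>2) < sqrt D" using Dgt by (simp only: real_sqrt_less_iff)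
  then have sg: "\<bar>q\<bar> < sqrt D" by simp
  define r where "r = (- q + sqrt D) / (2 * p)"
  define r' where "r' = (- q - sqrt D) / (2 * p)"
  have r: "0 < r" unfolding r_def using sg p by (intro divide_pos_pos) auto
  have r': "r' < 0" unfolding r'_def using sg p by (intro divide_neg_pos) auto
  have fac: "p * x\<^sup>2 + q * x + s = p * (x - r) * (x - r')" for x
  proof -
    have "p * (x - r) * (x - r') = p * x\<^sup>2 - p * (r + r') * x + p * (r * r')"
      by (simp add: power2_eq_square algebra_simps)
    also have "p * (r + r') = - q" unfolding r_def r'_def using p by (simp add: field_simps)
    also have "p * (r * r') = (q\<^sup>2 - (sqrt D)\<^sup>2) / (4 * p)" unfolding r_def r'_def using p
      by (simp add: field_simps power2_eq_square)
    also have "\<dots> = s" unfolding sq unfolding D_def using p by (simp add: field_simps)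
    finally show ?thesis by simp
  qed
  show ?thesis
  proof (intro exI[of _ r] conjI allI impI r)
    show "p * r\<^sup>2 + q * r + s = 0" unfolding fac by simp
  next
    fix x :: real assume x: "0 < x"
    then have "0 < x - r'" using r' by simp
    then show "(0 < p * x\<^sup>2 + q * x + s) = (r < x)" unfolding fac using p
      by (simp add: zero_less_mult_iff)
  next
    fix x :: real assume x: "0 < x" and "p * x\<^sup>2 + q * x + s = 0"
    then have "p * (x - r) * (x - r') = 0" unfolding fac by simp
    moreover have "x - r' \<noteq> 0" using x r' by simp
    ultimately show "x = r" using p by simp
  qed
qed

lemma quad_g_expand:
  "quad_g l \<delta> \<alpha> = (pi\<^sup>2 * \<delta> + 2 * pi * l - l\<^sup>2) * \<alpha>\<^sup>2
     + ((2 * (pi * \<delta> + l) * (pi - l) - pi * l * (1 + \<delta>)) / (pi - l)) * \<alpha>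
     + (\<delta> - (1 + \<delta>) * l / (pi - l))"
  unfolding quad_g_def by simp

lemma P_pos:
  assumes "0 < l" "l < pi" "0 \<le> \<delta>"
  shows "0 < pi\<^sup>2 * \<delta> + 2 * pi * l - l\<^sup>2"
proof -
  have "0 < l * (2 * pi - l)" using assms by simp
  moreover have "0 \<le> pi\<^sup>2 * \<delta>" using assms by simp
  ultimately show ?thesis by (simp add: power2_eq_square algebra_simps)
qed

lemma alpha_g_char:
  assumes l: "0 < l" "l < pi" and d: "0 \<le> \<delta>" and al: "0 < \<alpha>"
  shows "alpha_g l \<delta> < \<alpha> \<longleftrightarrow> 0 < quad_g l \<delta> \<alpha>"
proof (cases "(1 + \<delta>) * l > \<delta> * (pi - l)")
  case True
  define P where "P = pi\<^sup>2 * \<delta> + 2 * pi * l - l\<^sup>2"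
  define q where "q = (2 * (pi * \<delta> + l) * (pi - l) - pi * l * (1 + \<delta>)) / (pi - l)"
  define s where "s = \<delta> - (1 + \<delta>) * l / (pi - l)"
  have P: "0 < P" unfolding P_def using P_pos l d by simp
  have pl: "0 < pi - l" using l by simp
  have "\<delta> < (1 + \<delta>) * l / (pi - l)" using True pl by (simp add: pos_less_divide_eq)
  then have s: "s < 0" unfolding s_def by simp
  have qg: "quad_g l \<delta> x = P * x\<^sup>2 + q * x + s" for x
    unfolding quad_g_expand P_def q_def s_def ..
  obtain r where r: "r > 0" "P * r\<^sup>2 + q * r + s = 0"
      "\<forall>x>0. P * x\<^sup>2 + q * x + s > 0 \<longleftrightarrow> x > r" "\<forall>x>0. P * x\<^sup>2 + q * x + s = 0 \<longrightarrow> x = r"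
    using pos_root[OF P s, of q] by blast
  have "alpha_g l \<delta> = (THE \<alpha>. \<alpha> > 0 \<and> quad_g l \<delta> \<alpha> = 0)" using True unfolding alpha_g_def by simp
  also have "\<dots> = r"
  proof (rule the_equality)
    show "0 < r \<and> quad_g l \<delta> r = 0" unfolding qg using r(1,2) by blast
  next
    fix x assume "0 < x \<and> quad_g l \<delta> x = 0"
    then show "x = r" unfolding qg using r(4) by blast
  qed
  finally have ag: "alpha_g l \<delta> = r" .
  have "0 < quad_g l \<delta> \<alpha> \<longleftrightarrow> \<alpha> > r" unfolding qg using r(3) al by blast
  then show ?thesis unfolding ag by blast
next
  case False
  then have ag: "alpha_g l \<delta> = 0" unfolding alpha_g_def by simp
  define P where "P = pi\<^sup>2 * \<delta> + 2 * pi * l - l\<^sup>2"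
  define N where "N = 2 * (pi * \<delta> + l) * (pi - l) - pi * l * (1 + \<delta>)"
  define s where "s = \<delta> - (1 + \<delta>) * l / (pi - l)"
  have P: "0 < P" unfolding P_def using P_pos l d by simp
  have pl: "0 < pi - l" using l by simp
  have F: "(1 + \<delta>) * l \<le> \<delta> * (pi - l)" using False by simp
  then have "pi * ((1 + \<delta>) * l) \<le> pi * (\<delta> * (pi - l))" by (simp add: mult_left_mono)
  moreover have "0 < pi * ((1 + \<delta>) * l)" using l d by simp
  moreover have "0 < 2 * l * (pi - l)" using l by simp
  moreover have "N = 2 * (pi * (\<delta> * (pi - l))) + 2 * l * (pi - l) - pi * ((1 + \<delta>) * l)"
    unfolding N_def by (simp add: algebra_simps)
  ultimately have N: "0 < N" by linarith
  have "(1 + \<delta>) * l / (pi - l) \<le> \<delta>" using F pl by (simp add: pos_divide_le_eq)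
  then have s: "0 \<le> s" unfolding s_def by simp
  have qg: "quad_g l \<delta> \<alpha> = P * \<alpha>\<^sup>2 + N / (pi - l) * \<alpha> + s"
    unfolding quad_g_expand P_def N_def s_def ..
  have "0 < P * \<alpha>\<^sup>2" using P al by simp
  moreover have "0 < N / (pi - l) * \<alpha>" using N pl al by simp
  ultimately have "0 < quad_g l \<delta> \<alpha>" using s unfolding qg by linarith
  then show ?thesis using ag al by simp
qed
lemma D_eq:
  assumes "0 < \<alpha>"
  shows "(pi\<^sup>2 * \<delta> + 2 * pi * l - l\<^sup>2) * \<alpha>\<^sup>2 + 2 * (pi * \<delta> + l) * \<alpha> + \<delta>
           = (1 + \<alpha> * pi)\<^sup>2 * Ef \<alpha> l \<delta>"
proof -
  define A where "A = 1 + \<alpha> * pi"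
  have A: "0 < A" using assms pi_gt_zero unfolding A_def by (simp add: pos_add_strict)
  have cA: "c_alpha \<alpha> * A = \<alpha>" unfolding c_alpha_def A_def[symmetric] using A by simp
  have "A\<^sup>2 * Ef \<alpha> l \<delta> = A\<^sup>2 * \<delta> + 2 * l * (c_alpha \<alpha> * A) * A - l\<^sup>2 * (c_alpha \<alpha> * A)\<^sup>2"
    unfolding Ef_def by (simp add: power2_eq_square algebra_simps)
  also have "\<dots> = A\<^sup>2 * \<delta> + 2 * l * \<alpha> * A - l\<^sup>2 * \<alpha>\<^sup>2" unfolding cA ..
  also have "\<dots> = (pi\<^sup>2 * \<delta> + 2 * pi * l - l\<^sup>2) * \<alpha>\<^sup>2 + 2 * (pi * \<delta> + l) * \<alpha> + \<delta>"
    unfolding A_def by (simp add: power2_eq_square algebra_simps)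
  finally show ?thesis unfolding A_def by simp
qed

lemma quad_g_a0:
  assumes l: "0 < l" "l < pi" and d: "0 \<le> \<delta>" and al: "0 < \<alpha>"
  shows "0 < quad_g l \<delta> \<alpha> \<longleftrightarrow> a_zero \<alpha> l \<delta> < pi - l"
proof -
  define A where "A = 1 + \<alpha> * pi"
  define E where "E = Ef \<alpha> l \<delta>"
  have A: "0 < A" using al pi_gt_zero unfolding A_def by (simp add: pos_add_strict)
  have E: "0 < E" unfolding E_def using Ef_pos l d al by simp
  have pl: "0 < pi - l" using l by simp
  define P where "P = pi\<^sup>2 * \<delta> + 2 * pi * l - l\<^sup>2"
  define N where "N = 2 * (pi * \<delta> + l) * (pi - l) - pi * l * (1 + \<delta>)"
  have e1: "(N / (pi - l) * \<alpha>) * (pi - l) = N * \<alpha>" using pl by simp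
  have e2: "((1 + \<delta>) * l / (pi - l)) * (pi - l) = (1 + \<delta>) * l" using pl by simp
  have "quad_g l \<delta> \<alpha> * (pi - l) = P * \<alpha>\<^sup>2 * (pi - l) + (N / (pi - l) * \<alpha>) * (pi - l) + \<delta> * (pi - l)
          - ((1 + \<delta>) * l / (pi - l)) * (pi - l)"
    unfolding quad_g_expand P_def[symmetric] N_def[symmetric] by (simp only: distrib_right left_diff_distrib)
  also have "\<dots> = P * \<alpha>\<^sup>2 * (pi - l) + N * \<alpha> + \<delta> * (pi - l) - (1 + \<delta>) * l" unfolding e1 e2 ..
  also have "\<dots> = (pi - l) * ((pi\<^sup>2 * \<delta> + 2 * pi * l - l\<^sup>2) * \<alpha>\<^sup>2 + 2 * (pi * \<delta> + l) * \<alpha> + \<delta>) - (1 + \<delta>) * l * A"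
    unfolding P_def N_def A_def by (simp add: algebra_simps)
  also have "\<dots> = (pi - l) * A\<^sup>2 * E - (1 + \<delta>) * l * A"
    unfolding D_eq[OF al] A_def E_def by simp
  finally have qe: "quad_g l \<delta> \<alpha> * (pi - l) = A * ((pi - l) * A * E - (1 + \<delta>) * l)"
    by (simp add: power2_eq_square algebra_simps)
  have "0 < quad_g l \<delta> \<alpha> \<longleftrightarrow> 0 < quad_g l \<delta> \<alpha> * (pi - l)" using pl by (simp add: zero_less_mult_iff)
  also have "\<dots> \<longleftrightarrow> (1 + \<delta>) * l < (pi - l) * (A * E)" unfolding qe using A by (simp add: zero_less_mult_iff mult.assoc)
  also have "\<dots> \<longleftrightarrow> (1 + \<delta>) * l / (A * E) < pi - l" using A E by (simp add: pos_divide_less_eq)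
  also have "\<dots> \<longleftrightarrow> a_zero \<alpha> l \<delta> < pi - l" unfolding a_zero_def A_def E_def Ef_def ..
  finally show ?thesis .
qed

lemma ThetaA:
  assumes l: "0 < l" "l < pi" and d: "0 \<le> \<delta>" and al: "0 < \<alpha>" and g: "alpha_g l \<delta> < \<alpha>"
  shows "Theta \<alpha> l \<delta> = Qf \<alpha> l \<delta> (a_zero \<alpha> l \<delta>)"
proof -
  define A where "A = 1 + \<alpha> * pi"
  define E where "E = Ef \<alpha> l \<delta>"
  define \<beta> where "\<beta> = l * (1 - c_alpha \<alpha> * pi)"
  define \<gamma> where "\<gamma> = E / (1 + \<delta>)"
  have A: "0 < A" using al pi_gt_zero unfolding A_def by (simp add: pos_add_strict)
  have E: "0 < E" unfolding E_def using Ef_pos l d al by simp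
  have \<gamma>: "0 < \<gamma>" unfolding \<gamma>_def using E d by simp
  have b: "\<beta> = l / A" unfolding \<beta>_def A_def one_minus_cpi[OF al] by simp
  have a0: "a_zero \<alpha> l \<delta> = \<beta> / \<gamma>" unfolding a0_eq[OF al] \<beta>_def \<gamma>_def E_def using d by simp
  have "Qf \<alpha> l \<delta> (a_zero \<alpha> l \<delta>) = \<delta> * pi\<^sup>2 / 2 + pi * l - l\<^sup>2 / 2 + \<beta> * (\<beta> / \<gamma>) - \<gamma> * (\<beta> / \<gamma>)\<^sup>2 / 2"
    unfolding Qf_def a0 \<beta>_def[symmetric] E_def[symmetric] \<gamma>_def[symmetric] ..
  also have "\<dots> = \<delta> * pi\<^sup>2 / 2 + pi * l - l\<^sup>2 / 2 + \<beta>\<^sup>2 / (2 * \<gamma>)"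
    using \<gamma> by (simp add: field_simps power2_eq_square)
  also have "\<beta>\<^sup>2 / (2 * \<gamma>) = (1/2) * ((1 + \<delta>) * l\<^sup>2 / (A\<^sup>2 * E))"
    unfolding b \<gamma>_def using A E d by (simp add: field_simps power2_eq_square)
  finally show ?thesis using g unfolding Theta_def D_eq[OF al] A_def E_def by simp
qed

lemma ThetaB:
  assumes l: "0 < l" "l < pi" and d: "0 \<le> \<delta>" and al: "0 < \<alpha>" and g: "\<not> alpha_g l \<delta> < \<alpha>"
  shows "Theta \<alpha> l \<delta> = Qf \<alpha> l \<delta> (pi - l)"
proof -
  have nz: "1 + \<delta> \<noteq> 0" using d by simp
  show ?thesis using g nz unfolding Theta_def Qf_def Ef_def one_minus_cpi[OF al]
    by (simp add: field_simps power2_eq_square)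
qed

theorem lemma3:
  fixes l \<alpha> \<delta> :: real
  assumes "0 < l" "l < pi" "0 < \<alpha>" "0 \<le> \<delta>"
  defines "oscJ \<equiv> (\<lambda>a. osc (robin_sol \<alpha> (\<lambda>y. \<delta> + indicator (I_int a l) y)))"
  shows "((\<exists>a\<in>{0..pi - l}. oscJ a = Theta \<alpha> l \<delta>) \<and> (\<forall>a\<in>{0..pi - l}. oscJ a \<le> Theta \<alpha> l \<delta>))
       \<and> (\<alpha> > alpha_g l \<delta> \<longrightarrow>
           strict_mono_on ({0..a_zero \<alpha> l \<delta>} \<inter> {0..pi - l}) oscJ \<and>
           strict_antimono_on ({a_zero \<alpha> l \<delta>..pi - l} \<inter> {0..pi - l}) oscJ)
       \<and> (\<alpha> \<le> alpha_g l \<delta> \<longrightarrow> strict_mono_on {0..pi - l} oscJ)"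
proof -
  note l = assms(1,2) and al = assms(3) and d = assms(4)
  define c where "c = c_alpha \<alpha>"
  define a0 where "a0 = a_zero \<alpha> l \<delta>"
  define OB where "OB a = \<delta> * ((l - c * a * l) / \<delta> + pi)\<^sup>2 / 2" for a
  have c: "0 < c" "c * pi < 1" using c_pos c_pi_lt al unfolding c_def by auto
  have a0pos: "0 < a0" unfolding a0_def using a0_pos l al d by simp
  have a0a1: "a0 * (c * l + \<delta>) \<le> l * (1 + \<delta>)" unfolding a0_def c_def using a0_le_a1 l al d by simp
  have cld: "0 \<le> c * l + \<delta>" using c l d by simp
  have OA: "oscJ a = Qf \<alpha> l \<delta> a" if "0 \<le> a" "a \<le> pi - l" "a * (c * l + \<delta>) \<le> l * (1 + \<delta>)" for a
    unfolding oscJ_def using oscA[OF l al d that[unfolded c_def]] QA_eq[OF d] by simp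
  have OBe: "oscJ a = OB a" if "0 \<le> a" "a \<le> pi - l" "l * (1 + \<delta>) \<le> a * (c * l + \<delta>)" "0 < \<delta>" for a
    unfolding oscJ_def OB_def c_def using oscB[OF l al that(4) that(1,2) that(3)[unfolded c_def]] by simp
  have ca: "c * a < 1" if "a \<le> pi" for a
  proof -
    have "c * a \<le> c * pi" by (rule mult_left_mono) (use that c in auto)
    then show ?thesis using c by linarith
  qed
  have Bdec: "OB b < OB a" if "0 < \<delta>" "0 \<le> a" "a < b" "b \<le> pi" for a b
  proof -
    have "0 < l * (1 - c * b)" using ca[OF that(4)] l by simp
    moreover have "l - c * b * l = l * (1 - c * b)" by (simp add: algebra_simps)
    ultimately have "0 < (l - c * b * l) / \<delta>" using that(1) by simp
    then have xb: "0 < (l - c * b * l) / \<delta> + pi" using pi_gt_zero by linarith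
    have "c * a * l < c * b * l" using that c l by simp
    then have "(l - c * b * l) / \<delta> < (l - c * a * l) / \<delta>" using that(1) by (simp add: divide_strict_right_mono)
    then have "((l - c * b * l) / \<delta> + pi)\<^sup>2 < ((l - c * a * l) / \<delta> + pi)\<^sup>2"
      using xb by (intro power_strict_mono) auto
    then show ?thesis unfolding OB_def using that(1) by simp
  qed
  have dpos: "0 < \<delta>" if "0 \<le> a" "a \<le> pi - l" "\<not> a * (c * l + \<delta>) \<le> l * (1 + \<delta>)" for a
  proof (rule ccontr)
    assume "\<not> 0 < \<delta>"
    then have "\<delta> = 0" using d by simp
    moreover have "c * a * l \<le> l" using ca[of a] that l by simp
    ultimately show False using that(3) by (simp add: algebra_simps)
  qed
  have A_le: "a * (c * l + \<delta>) \<le> l * (1 + \<delta>)" if "a \<le> b" "b * (c * l + \<delta>) \<le> l * (1 + \<delta>)" for a b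
    using mult_right_mono[OF that(1) cld] that(2) by simp
  have M1: "oscJ a < oscJ b" if "0 \<le> a" "a < b" "b \<le> a0" "b \<le> pi - l" for a b
  proof -
    have "b * (c * l + \<delta>) \<le> l * (1 + \<delta>)" using A_le[OF that(3) a0a1] .
    moreover have "a * (c * l + \<delta>) \<le> l * (1 + \<delta>)" using A_le[of a b] that calculation by simp
    ultimately show ?thesis using OA[of a] OA[of b] that Q_inc[OF l al d, of a b] unfolding a0_def by simp
  qed
  have M2: "oscJ b < oscJ a" if "a0 \<le> a" "a < b" "b \<le> pi - l" for a b
  proof -
    have a: "0 \<le> a" "a \<le> pi - l" using that a0pos by auto
    have b: "0 \<le> b" using that a0pos by auto
    show ?thesis
    proof (cases "b * (c * l + \<delta>) \<le> l * (1 + \<delta>)")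
      case True
      then have "a * (c * l + \<delta>) \<le> l * (1 + \<delta>)" using A_le[of a b] that by simp
      then show ?thesis using OA[OF a] OA[OF b that(3) True] Q_dec[OF l al d that(2)] that(1)
        unfolding a0_def by simp
    next
      case False
      have dp: "0 < \<delta>" using dpos[OF b that(3) False] .
      have "0 < c * l" using c l by simp
      then have cl0: "0 < c * l + \<delta>" using dp by linarith
      show ?thesis
      proof (cases "a * (c * l + \<delta>) \<le> l * (1 + \<delta>)")
        case True
        define m where "m = l * (1 + \<delta>) / (c * l + \<delta>)"
        have mm: "m * (c * l + \<delta>) = l * (1 + \<delta>)" unfolding m_def using cl0 by simp
        have am: "a \<le> m" unfolding m_def using True cl0 by (simp add: pos_le_divide_eq)
        have mb: "m < b" unfolding m_def using False cl0 by (simp add: pos_divide_less_eq)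
        have m0: "0 \<le> m" "m \<le> pi - l" using am mb a that by auto
        have "Qf \<alpha> l \<delta> m \<le> Qf \<alpha> l \<delta> a"
        proof (cases "a = m")
          case False
          then show ?thesis using Q_dec[OF l al d, of a m] am that(1) unfolding a0_def by simp
        qed simp
        moreover have "oscJ m = Qf \<alpha> l \<delta> m" using OA[OF m0] mm by simp
        moreover have "oscJ m = OB m" using OBe[OF m0 _ dp] mm by simp
        moreover have "OB b < OB m" using Bdec[OF dp m0(1) mb] that l by simp
        moreover have "oscJ b = OB b" using OBe[OF b that(3) _ dp] False by simp
        ultimately show ?thesis using OA[OF a True] by simp
      next
        case False2: False
        show ?thesis using OBe[OF a _ dp] OBe[OF b that(3) _ dp] False False2
          Bdec[OF dp a(1) that(2)] that l by simp
      qed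
    qed
  qed
  have iff: "alpha_g l \<delta> < \<alpha> \<longleftrightarrow> a0 < pi - l"
    unfolding a0_def using alpha_g_char[OF l d al] quad_g_a0[OF l d al] by simp
  show ?thesis
  proof (cases "alpha_g l \<delta> < \<alpha>")
    case True
    then have a0l: "a0 < pi - l" using iff by simp
    have T: "Theta \<alpha> l \<delta> = oscJ a0"
      using ThetaA[OF l d al True] OA[of a0] a0pos a0l a0a1 unfolding a0_def by simp
    have max: "oscJ a \<le> oscJ a0" if "a \<in> {0..pi - l}" for a
    proof -
      consider "a < a0" | "a = a0" | "a0 < a" by linarith
      then show ?thesis
      proof cases
        case 1 then show ?thesis using M1[of a a0] that a0l by auto
      next
        case 3 then show ?thesis using M2[of a0 a] that by auto
      qed simp
    qed
    have sm: "strict_mono_on ({0..a_zero \<alpha> l \<delta>} \<inter> {0..pi - l}) oscJ"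
      by (rule strict_mono_onI) (use M1 in \<open>auto simp: a0_def\<close>)
    have sa: "strict_antimono_on ({a_zero \<alpha> l \<delta>..pi - l} \<inter> {0..pi - l}) oscJ"
      by (rule monotone_onI) (use M2 in \<open>auto simp: a0_def\<close>)
    show ?thesis using T max sm sa True a0pos a0l by auto
  next
    case False
    then have a0l: "pi - l \<le> a0" using iff by simp
    have T: "Theta \<alpha> l \<delta> = oscJ (pi - l)"
      using ThetaB[OF l d al False] OA[of "pi - l"] l A_le[OF a0l a0a1] by simp
    have max: "oscJ a \<le> oscJ (pi - l)" if "a \<in> {0..pi - l}" for a
      using M1[of a "pi - l"] that a0l by (cases "a = pi - l") auto
    have sm: "strict_mono_on {0..pi - l} oscJ"
      by (rule strict_mono_onI) (use M1 a0l in auto)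
    show ?thesis using T max sm False l by auto
  qed
qed

end
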